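(* Let $L\in\mathbb{R}^{N\times N}$ be invertible, $C=LL^T$, and let $D$ be the diagonal matrix with $D_{ii}=\sqrt{C_{ii}}$. Let $D_{opt}$ be an invertible diagonal matrix minimizing $\kappa(G^{-1}L)$ over all invertible diagonal matrices $G$. Then $$\kappa(D^{-1}L)\le\sqrt{N}\,\kappa(D_{opt}^{-1}L).$$ Furthermore, if at most $K$ entries in each row of $LL^T$ are nonzero, then $$\kappa(D^{-1}L)\le\sqrt{K}\,\kappa(D_{opt}^{-1}L).$$
   Context: For an invertible matrix $B\in\mathbb{R}^{N\times N}$, $\kappa(B):=\|B\|_2\,\|B^{-1}\|_{S^4}$, where $\|\cdot\|_2$ is the spectral norm and $\|A\|_{S^4}:=\left(\sum_{n} s_n^4\right)^{1/4}$ with $s_n$ the singular values of $A$ (fourth Schatten norm). *)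

theory Defs
  imports "Jordan_Normal_Form.Char_Poly" "HOL-Computational_Algebra.Polynomial"
begin

definition mat_inv :: "real mat \<Rightarrow> real mat" where
  "mat_inv A = (SOME B. inverts_mat A B \<and> inverts_mat B A)"

definition vnorm2 :: "real vec \<Rightarrow> real" where
  "vnorm2 v = sqrt (\<Sum>i<dim_vec v. (v $ i)^2)"

(* spectral norm = operator 2-norm  sup_{|x|=1} |Ax|  (0 inserted only to make the
   sup well-defined for the degenerate 0x0 case; all norms are >= 0) *)
definition spec_norm :: "real mat \<Rightarrow> real" where
  "spec_norm A = Sup (insert 0 {vnorm2 (A *\<^sub>v x) | x. x \<in> carrier_vec (dim_col A) \<and> vnorm2 x = 1})"

definition singular_values :: "real mat \<Rightarrow> real multiset" where
  "singular_values A = image_mset sqrt (proots (char_poly (transpose_mat A * A)))"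

definition schatten4 :: "real mat \<Rightarrow> real" where
  "schatten4 A = root 4 (\<Sum>s\<in>#singular_values A. s ^ 4)"

definition kappa :: "real mat \<Rightarrow> real" where
  "kappa B = spec_norm B * schatten4 (mat_inv B)"

definition jacobi_diag :: "real mat \<Rightarrow> real mat" where
  "jacobi_diag L = (let C = L * transpose_mat L in
     mat (dim_row L) (dim_row L) (\<lambda>(i,j). if i = j then sqrt (C $$ (i,i)) else 0))"

end

theory Submission
  imports Defs "Jordan_Normal_Form.Schur_Decomposition"
begin

lemma sym_real_eigenvalue_real:
  fixes M :: "real mat"
  assumes M: "M \<in> carrier_mat n n" and sym: "\<And>i j. i<n \<Longrightarrow> j<n \<Longrightarrow> M$$(i,j) = M$$(j,i)"
  and ev: "eigenvalue (map_mat complex_of_real M) e"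
  shows "Im e = 0"
proof -
  let ?Mc = "map_mat complex_of_real M"
  obtain v where "eigenvector ?Mc v e" using ev unfolding eigenvalue_def by blast
  hence v: "v \<in> carrier_vec n" "v \<noteq> 0\<^sub>v n" "?Mc *\<^sub>v v = e \<cdot>\<^sub>v v"
    using M unfolding eigenvector_def by auto
  define s where "s = (\<Sum>i<n. cnj (v$i) * ((?Mc *\<^sub>v v) $ i))"
  have s1: "s = e * (\<Sum>i<n. cnj (v$i) * v$i)"
    unfolding s_def v(3) using v(1) by (simp add: sum_distrib_left algebra_simps)
  have mv: "(?Mc *\<^sub>v v) $ i = (\<Sum>j<n. of_real (M$$(i,j)) * v$j)" if "i < n" for i
    using that M v(1) by (auto simp: scalar_prod_def atLeast0LessThan)
  have s2: "s = (\<Sum>i<n. \<Sum>j<n. cnj (v$i) * of_real (M$$(i,j)) * v$j)"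
    unfolding s_def by (simp add: mv sum_distrib_left mult.assoc)
  have "cnj s = (\<Sum>i<n. \<Sum>j<n. v$i * of_real (M$$(i,j)) * cnj (v$j))"
    unfolding s2 by simp
  also have "\<dots> = (\<Sum>j<n. \<Sum>i<n. v$i * of_real (M$$(i,j)) * cnj (v$j))"
    by (rule sum.swap)
  also have "\<dots> = s" unfolding s2
    by (intro sum.cong refl, simp add: sym mult.commute mult.left_commute)
  finally have "cnj s = s" .
  hence ims: "Im s = 0" by (metis Reals_cnj_iff complex_is_Real_iff)
  define r where "r = (\<Sum>i<n. (cmod (v$i))^2)"
  have r: "(\<Sum>i<n. cnj (v$i) * v$i) = of_real r"
    unfolding r_def of_real_sum by (intro sum.cong refl) (simp only: complex_norm_square, simp add: mult.commute)
  obtain i where i: "i < n" "v $ i \<noteq> 0" using v(1,2) by (metis vec_eq_iff carrier_vecD index_zero_vec)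
  have "0 < (cmod (v$i))^2" using i by simp
  also have "\<dots> \<le> r" unfolding r_def using i by (intro member_le_sum) auto
  finally have rpos: "r > 0" .
  have "e = s / of_real r" using s1 r rpos by (simp add: field_simps)
  thus ?thesis using ims rpos by (simp add: Im_divide_of_real)
qed

lemma sym_real_split:
  fixes M :: "real mat"
  assumes M: "M \<in> carrier_mat n n" and sym: "\<And>i j. i<n \<Longrightarrow> j<n \<Longrightarrow> M$$(i,j) = M$$(j,i)"
  shows "\<exists>rs. char_poly M = (\<Prod>r\<leftarrow>rs. [:-r,1:])"
proof -
  let ?Mc = "map_mat complex_of_real M"
  have Mc: "?Mc \<in> carrier_mat n n" using M by auto
  obtain as where as: "char_poly ?Mc = (\<Prod>a\<leftarrow>as. [:-a,1:])" using char_poly_factorized[OF Mc] by auto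
  have real: "Im a = 0" if "a \<in> set as" for a
  proof -
    have "poly (char_poly ?Mc) a = 0" unfolding as using that
      by (simp add: poly_prod_list prod_list_zero_iff)
    hence "eigenvalue ?Mc a" using eigenvalue_root_char_poly[OF Mc] by simp
    thus ?thesis using sym_real_eigenvalue_real[OF M sym] by blast
  qed
  define rs where "rs = map Re as"
  have asrs: "as = map of_real rs" unfolding rs_def using real
    by (induct as) (auto simp: complex_eq_iff)
  have "map_poly of_real (char_poly M) = char_poly ?Mc" by (rule of_real_hom.char_poly_hom[OF M, symmetric])
  also have "\<dots> = map_poly of_real (\<Prod>r\<leftarrow>rs. [:-r,1:])"
  proof -
    interpret mp: map_poly_comm_ring_hom "complex_of_real" ..
    show ?thesis unfolding as asrs mp.hom_prod_list by (simp add: o_def)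
  qed
  finally have eq: "map_poly complex_of_real (char_poly M) = map_poly of_real (\<Prod>r\<leftarrow>rs. [:-r,1:])" .
  have "char_poly M = (\<Prod>r\<leftarrow>rs. [:-r,1:])"
  proof (rule poly_eqI)
    fix k
    from arg_cong[OF eq, of "\<lambda>p. coeff p k"]
    show "coeff (char_poly M) k = coeff (\<Prod>r\<leftarrow>rs. [:-r,1:]) k" by simp
  qed
  thus ?thesis by blast
qed

definition mtr :: "real mat \<Rightarrow> real" where "mtr A = (\<Sum>i<dim_row A. A$$(i,i))"

lemma mtr_comm: assumes A: "A \<in> carrier_mat n n" and B: "B \<in> carrier_mat n n"
  shows "mtr (A * B) = mtr (B * A)"
proof -
  have "mtr (A*B) = (\<Sum>i<n. \<Sum>k<n. A$$(i,k) * B$$(k,i))"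
    unfolding mtr_def using A B by (simp add: scalar_prod_def atLeast0LessThan)
  also have "\<dots> = (\<Sum>k<n. \<Sum>i<n. B$$(k,i) * A$$(i,k))"
    by (subst sum.swap) (simp add: mult.commute)
  also have "\<dots> = mtr (B*A)"
    unfolding mtr_def using A B by (simp add: scalar_prod_def atLeast0LessThan)
  finally show ?thesis .
qed

lemma split_trace_sq:
  fixes M :: "real mat"
  assumes M: "M \<in> carrier_mat n n" and c: "char_poly M = (\<Prod>r\<leftarrow>rs. [:-r,1:])"
  shows "(\<Sum>r\<leftarrow>rs. r^2) = mtr (M * M)"
proof -
  obtain B P Q where sd: "schur_decomposition M rs = (B,P,Q)" by (cases "schur_decomposition M rs") auto
  from schur_decomposition[OF M c sd] have sim: "similar_mat_wit M B P Q"
    and ut: "upper_triangular B" and dg: "diag_mat B = rs" by auto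
  from similar_mat_witD2[OF M sim] have B: "B \<in> carrier_mat n n" and P: "P \<in> carrier_mat n n"
    and Q: "Q \<in> carrier_mat n n" and QP: "Q * P = 1\<^sub>m n" and MPBQ: "M = P * B * Q" by auto
  have "M * M = P * (B * B) * Q"
  proof -
    have "M * M = P * B * (Q * P) * B * Q" unfolding MPBQ using B P Q
      by (simp add: assoc_mult_mat[of _ n n _ n _ n])
    also have "\<dots> = P * (B * B) * Q" unfolding QP using B P Q
      by (simp add: assoc_mult_mat[of _ n n _ n _ n])
    finally show ?thesis .
  qed
  hence "mtr (M*M) = mtr (P * (B * B * Q))" using B P Q by (simp add: assoc_mult_mat[of _ n n _ n _ n])
  also have "\<dots> = mtr (B * B * Q * P)" using B P Q by (subst mtr_comm[of _ n]) (auto simp: assoc_mult_mat[of _ n n _ n _ n])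
  also have "\<dots> = mtr (B * B)" using B P Q QP by (simp add: assoc_mult_mat[of _ n n _ n _ n])
  also have "\<dots> = (\<Sum>i<n. (B$$(i,i))^2)"
  proof -
    have "(B*B)$$(i,i) = (B$$(i,i))^2" if i: "i < n" for i
    proof -
      have "(B*B)$$(i,i) = (\<Sum>k\<in>{0..<n}. B$$(i,k) * B$$(k,i))"
        using B i by (simp add: scalar_prod_def)
      also have "\<dots> = (\<Sum>k\<in>{0..<n}. if k = i then (B$$(i,i))^2 else 0)"
      proof (intro sum.cong refl)
        fix k assume k: "k \<in> {0..<n}"
        show "B$$(i,k) * B$$(k,i) = (if k = i then (B$$(i,i))^2 else 0)"
        proof (cases "k < i")
          case True thus ?thesis using ut i B by (auto simp: upper_triangular_def)
        next
          case False
          show ?thesis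
          proof (cases "k = i")
            case True thus ?thesis by (simp add: power2_eq_square)
          next
            case False
            with \<open>\<not> k < i\<close> have "i < k" by simp
            thus ?thesis using ut k B by (auto simp: upper_triangular_def)
          qed
        qed
      qed
      also have "\<dots> = (B$$(i,i))^2" using i by simp
      finally show ?thesis .
    qed
    thus ?thesis unfolding mtr_def using B by simp
  qed
  also have "\<dots> = (\<Sum>r\<leftarrow>rs. r^2)" unfolding dg[symmetric] diag_mat_def using B
    by (simp add: interv_sum_list_conv_sum_set_nat o_def atLeast0LessThan)
  finally show ?thesis by simp
qed

lemma proots_lin_prod: "proots (\<Prod>r\<leftarrow>rs. [:-r,1:]) = mset (rs :: real list)"
proof (induct rs)
  case (Cons a rs)
  have ne: "(\<Prod>r\<leftarrow>rs. [:-r,1:]) \<noteq> (0::real poly)" by (auto simp: prod_list_zero_iff)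
  have "proots (\<Prod>r\<leftarrow>a#rs. [:-r,1:]) = proots ([:-a,1:] * (\<Prod>r\<leftarrow>rs. [:-r,1:]))"
    by (simp only: list.map prod_list.Cons)
  also have "\<dots> = proots [:-a,1:] + proots (\<Prod>r\<leftarrow>rs. [:-r,1:])"
    by (rule proots_mult) (use ne in auto)
  also have "\<dots> = mset (a#rs)" using Cons by simp
  finally show ?case .
qed simp

lemma sqrt4: "(sqrt (r::real))^4 = r^2"
proof -
  have "(sqrt r)^4 = (sqrt r * sqrt r)^2" by (simp add: power2_eq_square power4_eq_xxxx mult.assoc)
  also have "\<dots> = r^2" by (simp add: real_sqrt_mult_self)
  finally show ?thesis .
qed

lemma schatten4_formula:
  fixes A :: "real mat"
  assumes A: "A \<in> carrier_mat n n"
  shows "schatten4 A = root 4 (\<Sum>i<n. \<Sum>j<n. ((transpose_mat A * A)$$(i,j))^2)"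
proof -
  define M where "M = transpose_mat A * A"
  have M: "M \<in> carrier_mat n n" unfolding M_def using A by auto
  have Mij: "M$$(i,j) = (\<Sum>k<n. A$$(k,i) * A$$(k,j))" if "i<n" "j<n" for i j
    unfolding M_def using that A by (simp add: scalar_prod_def atLeast0LessThan)
  have sym: "M$$(i,j) = M$$(j,i)" if "i<n" "j<n" for i j
    using that by (simp add: Mij mult.commute)
  obtain rs where c: "char_poly M = (\<Prod>r\<leftarrow>rs. [:-r,1:])" using sym_real_split[OF M sym] by blast
  have "(\<Sum>s\<in>#singular_values A. s ^ 4) = (\<Sum>r\<leftarrow>rs. r^2)"
    unfolding singular_values_def M_def[symmetric] c proots_lin_prod
    by (induct rs) (auto simp: sqrt4)
  also have "\<dots> = mtr (M * M)" by (rule split_trace_sq[OF M c])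
  also have "\<dots> = (\<Sum>i<n. \<Sum>j<n. (M$$(i,j))^2)"
    unfolding mtr_def using M by (auto simp: scalar_prod_def atLeast0LessThan sym power2_eq_square intro!: sum.cong)
  finally show ?thesis unfolding schatten4_def M_def by simp
qed

lemma CS_real:
  fixes a b :: "nat \<Rightarrow> real"
  assumes "finite I"
  shows "(\<Sum>i\<in>I. a i * b i)^2 \<le> (\<Sum>i\<in>I. (a i)^2) * (\<Sum>i\<in>I. (b i)^2)"
proof (cases "(\<Sum>i\<in>I. (b i)^2) = 0")
  case True
  hence "\<forall>i\<in>I. (b i)^2 = 0" using assms by (subst sum_nonneg_eq_0_iff[symmetric]) auto
  thus ?thesis by simp
next
  case False
  have Bp: "(\<Sum>i\<in>I. (b i)^2) > 0" using False by (metis less_eq_real_def sum_nonneg zero_le_power2)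
  define S where "S = (\<Sum>i\<in>I. (b i)^2)"
  define T where "T = (\<Sum>i\<in>I. a i * b i)"
  define R where "R = (\<Sum>i\<in>I. (a i)^2)"
  define t where "t = T / S"
  have Sp: "S > 0" using Bp unfolding S_def .
  have e: "(a i - t * b i)^2 = (a i)^2 - 2 * t * (a i * b i) + t^2 * (b i)^2" for i
    by (simp only: power2_eq_square algebra_simps)
  have "0 \<le> (\<Sum>i\<in>I. (a i - t * b i)^2)" by (rule sum_nonneg) simp
  also have "\<dots> = (\<Sum>i\<in>I. (a i)^2) - (\<Sum>i\<in>I. 2 * t * (a i * b i)) + (\<Sum>i\<in>I. t^2 * (b i)^2)"
    by (simp only: e sum.distrib sum_subtractf)
  also have "\<dots> = R - 2 * t * T + t^2 * S"
    unfolding R_def T_def S_def by (simp only: sum_distrib_left)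
  also have "\<dots> = R - T^2 / S" unfolding t_def using Sp by (simp add: field_simps power2_eq_square)
  finally have "T^2 / S \<le> R" by simp
  hence "T^2 \<le> R * S" using Sp by (simp add: pos_divide_le_eq)
  thus ?thesis unfolding S_def T_def R_def .
qed

lemma vnorm2_nonneg: "vnorm2 v \<ge> 0" unfolding vnorm2_def by (simp add: sum_nonneg)

lemma vnorm2_sq: "(vnorm2 v)^2 = (\<Sum>i<dim_vec v. (v$i)^2)"
  unfolding vnorm2_def by (simp add: sum_nonneg)

lemma vnorm2_one: "vnorm2 v = 1 \<Longrightarrow> (\<Sum>i<dim_vec v. (v$i)^2) = 1"
  using vnorm2_sq[of v] by simp

lemma vnorm2_ge_entry: "i < dim_vec v \<Longrightarrow> \<bar>v$i\<bar> \<le> vnorm2 v"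
proof -
  assume i: "i < dim_vec v"
  have "(v$i)^2 \<le> (\<Sum>k<dim_vec v. (v$k)^2)" using i by (intro member_le_sum) auto
  hence "sqrt ((v$i)^2) \<le> vnorm2 v" unfolding vnorm2_def by (rule real_sqrt_le_mono)
  thus ?thesis by simp
qed

lemma mv_entry: "B \<in> carrier_mat n n \<Longrightarrow> x \<in> carrier_vec n \<Longrightarrow> i < n \<Longrightarrow>
   (B *\<^sub>v x)$i = (\<Sum>j<n. B$$(i,j) * x$j)"
  by (simp add: scalar_prod_def atLeast0LessThan)

lemma vnorm2_mv_sq: assumes B: "B \<in> carrier_mat n n" and x: "x \<in> carrier_vec n" shows
   "(vnorm2 (B *\<^sub>v x))^2 = (\<Sum>i<n. (\<Sum>j<n. B$$(i,j) * x$j)^2)"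
proof -
  have "(vnorm2 (B *\<^sub>v x))^2 = (\<Sum>i<n. ((B *\<^sub>v x)$i)^2)" unfolding vnorm2_sq using B by simp
  also have "\<dots> = (\<Sum>i<n. (\<Sum>j<n. B$$(i,j) * x$j)^2)"
    by (intro sum.cong refl, subst mv_entry[OF B x]) auto
  finally show ?thesis .
qed

lemma frob_bound:
  assumes B: "B \<in> carrier_mat n n" and x: "x \<in> carrier_vec n" and x1: "vnorm2 x = 1"
  shows "(vnorm2 (B *\<^sub>v x))^2 \<le> (\<Sum>i<n. \<Sum>j<n. (B$$(i,j))^2)"
proof -
  have xs: "(\<Sum>j<n. (x$j)^2) = 1" using vnorm2_one[OF x1] x by simp
  have "(vnorm2 (B *\<^sub>v x))^2 = (\<Sum>i<n. (\<Sum>j<n. B$$(i,j) * x$j)^2)" by (rule vnorm2_mv_sq[OF B x])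
  also have "\<dots> \<le> (\<Sum>i<n. (\<Sum>j<n. (B$$(i,j))^2) * (\<Sum>j<n. (x$j)^2))"
    by (intro sum_mono CS_real) auto
  also have "\<dots> = (\<Sum>i<n. \<Sum>j<n. (B$$(i,j))^2)" by (simp add: xs)
  finally show ?thesis .
qed

lemma spec_norm_bdd:
  assumes B: "B \<in> carrier_mat n n"
  shows "bdd_above (insert 0 {vnorm2 (B *\<^sub>v x) | x. x \<in> carrier_vec (dim_col B) \<and> vnorm2 x = 1})"
proof -
  let ?F = "sqrt (\<Sum>i<n. \<Sum>j<n. (B$$(i,j))^2)"
  have "vnorm2 (B *\<^sub>v x) \<le> ?F" if "x \<in> carrier_vec n" "vnorm2 x = 1" for x
  proof -
    have "sqrt ((vnorm2 (B *\<^sub>v x))^2) \<le> ?F"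
      by (rule real_sqrt_le_mono, rule frob_bound[OF B that])
    thus ?thesis using vnorm2_nonneg[of "B *\<^sub>v x"] by simp
  qed
  hence "\<forall>y \<in> insert 0 {vnorm2 (B *\<^sub>v x) | x. x \<in> carrier_vec (dim_col B) \<and> vnorm2 x = 1}. y \<le> ?F"
    using B by (auto intro!: sum_nonneg)
  thus ?thesis unfolding bdd_above_def by blast
qed

lemma spec_norm_nonneg: assumes B: "B \<in> carrier_mat n n" shows "0 \<le> spec_norm B"
  unfolding spec_norm_def by (rule cSup_upper[OF _ spec_norm_bdd[OF B]]) simp

lemma spec_norm_ge:
  assumes B: "B \<in> carrier_mat n n" and x: "x \<in> carrier_vec n" and x1: "vnorm2 x = 1"
  shows "vnorm2 (B *\<^sub>v x) \<le> spec_norm B"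
  unfolding spec_norm_def by (rule cSup_upper[OF _ spec_norm_bdd[OF B]]) (use B x x1 in auto)

lemma spec_norm_le:
  assumes B: "B \<in> carrier_mat n n" and c: "c \<ge> 0"
    and h: "\<And>x. x \<in> carrier_vec n \<Longrightarrow> vnorm2 x = 1 \<Longrightarrow> (vnorm2 (B *\<^sub>v x))^2 \<le> c^2"
  shows "spec_norm B \<le> c"
  unfolding spec_norm_def
proof (rule cSup_least)
  fix y assume "y \<in> insert 0 {vnorm2 (B *\<^sub>v x) | x. x \<in> carrier_vec (dim_col B) \<and> vnorm2 x = 1}"
  then show "y \<le> c"
  proof
    assume "y = 0" thus ?thesis using c by simp
  next
    assume "y \<in> {vnorm2 (B *\<^sub>v x) | x. x \<in> carrier_vec (dim_col B) \<and> vnorm2 x = 1}"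
    then obtain x where x: "x \<in> carrier_vec n" "vnorm2 x = 1" and y: "y = vnorm2 (B *\<^sub>v x)" using B by auto
    have "y^2 \<le> c^2" using h[OF x] y by simp
    thus ?thesis using c by (simp add: power2_le_iff_abs_le)
  qed
qed simp

lemma spec_norm_row:
  assumes B: "B \<in> carrier_mat n n" and i: "i < n"
  shows "sqrt (\<Sum>j<n. (B$$(i,j))^2) \<le> spec_norm B"
proof -
  define S where "S = (\<Sum>j<n. (B$$(i,j))^2)"
  define r where "r = sqrt S"
  have S0: "S \<ge> 0" unfolding S_def by (simp add: sum_nonneg)
  show ?thesis
  proof (cases "r = 0")
    case True thus ?thesis using spec_norm_nonneg[OF B] unfolding r_def S_def by simp
  next
    case False
    hence rp: "r > 0" using S0 unfolding r_def by simp
    have rS: "r^2 = S" unfolding r_def using S0 by simp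
    define x where "x = vec n (\<lambda>j. B$$(i,j) / r)"
    have x: "x \<in> carrier_vec n" unfolding x_def by simp
    have "(\<Sum>j<n. (x$j)^2) = (\<Sum>j<n. (B$$(i,j))^2 / r^2)"
      unfolding x_def by (intro sum.cong refl) (simp add: power_divide)
    also have "\<dots> = S / r^2" unfolding S_def by (simp add: sum_divide_distrib)
    also have "\<dots> = 1" using rS rp by (metis divide_self power_not_zero less_irrefl)
    finally have x1: "vnorm2 x = 1" unfolding vnorm2_def using x by simp
    have "(B *\<^sub>v x)$i = (\<Sum>j<n. B$$(i,j) * (B$$(i,j) / r))" using mv_entry[OF B x i] unfolding x_def
      by simp
    also have "\<dots> = S / r" unfolding S_def by (simp add: sum_divide_distrib power2_eq_square)
    also have "\<dots> = r" using rS rp by (simp add: field_simps power2_eq_square)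
    finally have "(B *\<^sub>v x)$i = r" .
    hence "r \<le> vnorm2 (B *\<^sub>v x)" using vnorm2_ge_entry[of i "B *\<^sub>v x"] B i by simp
    also have "\<dots> \<le> spec_norm B" by (rule spec_norm_ge[OF B x x1])
    finally show ?thesis unfolding r_def S_def .
  qed
qed

lemma sparse_bound:
  fixes B :: "nat \<Rightarrow> nat \<Rightarrow> real" and x :: "nat \<Rightarrow> real" and n K :: nat
  assumes Q1: "\<And>i k. i<n \<Longrightarrow> k<n \<Longrightarrow> \<bar>\<Sum>j<n. B i j * B k j\<bar> \<le> 1"
    and cnt: "\<And>i. i<n \<Longrightarrow> card {k. k<n \<and> (\<Sum>j<n. B i j * B k j) \<noteq> 0} \<le> K"
    and x1: "(\<Sum>j<n. (x j)^2) = 1"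
  shows "(\<Sum>i<n. (\<Sum>j<n. B i j * x j)^2) \<le> real K"
proof -
  define Q where "Q i k = (\<Sum>j<n. B i j * B k j)" for i k
  define y where "y i = (\<Sum>j<n. B i j * x j)" for i
  define z where "z j = (\<Sum>i<n. B i j * y i)" for j
  define Y where "Y = (\<Sum>i<n. (y i)^2)"
  have Y0: "Y \<ge> 0" unfolding Y_def by (simp add: sum_nonneg)
  have Qsym: "Q i k = Q k i" for i k unfolding Q_def by (simp add: mult.commute)
  have "Y = (\<Sum>i<n. \<Sum>j<n. y i * B i j * x j)"
    unfolding Y_def y_def by (simp add: power2_eq_square sum_distrib_left mult.assoc)
  also have "\<dots> = (\<Sum>j<n. \<Sum>i<n. y i * B i j * x j)" by (rule sum.swap)
  also have "\<dots> = (\<Sum>j<n. x j * z j)"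
    unfolding z_def by (simp add: sum_distrib_left mult.commute mult.left_commute)
  finally have Yxz: "Y = (\<Sum>j<n. x j * z j)" .
  have "Y^2 \<le> (\<Sum>j<n. (x j)^2) * (\<Sum>j<n. (z j)^2)" unfolding Yxz by (rule CS_real) simp
  hence Y2: "Y^2 \<le> (\<Sum>j<n. (z j)^2)" using x1 by simp
  have "(\<Sum>j<n. (z j)^2) = (\<Sum>j<n. \<Sum>i<n. \<Sum>k<n. y i * y k * (B i j * B k j))"
    unfolding z_def by (simp add: power2_eq_square sum_product mult_ac)
  also have "\<dots> = (\<Sum>i<n. \<Sum>k<n. \<Sum>j<n. y i * y k * (B i j * B k j))"
    by (subst sum.swap, subst (2) sum.swap, rule refl)
  also have "\<dots> = (\<Sum>i<n. \<Sum>k<n. y i * y k * Q i k)"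
    unfolding Q_def by (simp add: sum_distrib_left)
  also have "\<dots> \<le> (\<Sum>i<n. \<Sum>k<n. (if Q i k \<noteq> 0 then (y i)^2 else 0) / 2
                                    + (if Q i k \<noteq> 0 then (y k)^2 else 0) / 2)"
  proof (intro sum_mono)
    fix i k assume i: "i \<in> {..<n}" and k: "k \<in> {..<n}"
    show "y i * y k * Q i k \<le> (if Q i k \<noteq> 0 then (y i)^2 else 0) / 2
                                    + (if Q i k \<noteq> 0 then (y k)^2 else 0) / 2"
    proof (cases "Q i k = 0")
      case False
      have q: "\<bar>Q i k\<bar> \<le> 1" using Q1 i k unfolding Q_def by auto
      have "y i * y k * Q i k \<le> \<bar>y i * y k\<bar> * \<bar>Q i k\<bar>" by (metis abs_ge_self abs_mult)
      also have "\<dots> \<le> \<bar>y i * y k\<bar>" using q by (simp add: mult_left_le)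
      also have "\<dots> \<le> ((y i)^2 + (y k)^2) / 2"
      proof -
        have "0 \<le> (\<bar>y i\<bar> - \<bar>y k\<bar>)^2" by simp
        thus ?thesis by (simp add: power2_eq_square algebra_simps abs_mult)
      qed
      finally show ?thesis using False by (simp add: add_divide_distrib)
    qed simp
  qed
  also have "\<dots> = (\<Sum>i<n. \<Sum>k<n. (if Q i k \<noteq> 0 then (y i)^2 else 0)) / 2
                + (\<Sum>i<n. \<Sum>k<n. (if Q i k \<noteq> 0 then (y k)^2 else 0)) / 2"
    by (simp add: sum.distrib sum_divide_distrib)
  also have "(\<Sum>i<n. \<Sum>k<n. (if Q i k \<noteq> 0 then (y k)^2 else 0))
           = (\<Sum>k<n. \<Sum>i<n. (if Q k i \<noteq> 0 then (y k)^2 else 0))"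
    by (subst sum.swap) (simp add: Qsym)
  also have "(\<Sum>k<n. \<Sum>i<n. (if Q k i \<noteq> 0 then (y k)^2 else 0)) \<le> real K * Y"
  proof -
    have "(\<Sum>i<n. (if Q k i \<noteq> 0 then (y k)^2 else 0)) \<le> real K * (y k)^2" if k: "k < n" for k
    proof -
      have "(\<Sum>i<n. (if Q k i \<noteq> 0 then (y k)^2 else 0)) = (\<Sum>i\<in>{i\<in>{..<n}. Q k i \<noteq> 0}. (y k)^2)"
        by (rule sum.inter_filter[symmetric]) simp
      also have "\<dots> = real (card {i. i<n \<and> Q k i \<noteq> 0}) * (y k)^2"
        by (simp add: conj_commute)
      also have "\<dots> \<le> real K * (y k)^2"
        using cnt[OF k] unfolding Q_def by (intro mult_right_mono) auto
      finally show ?thesis .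
    qed
    hence "(\<Sum>k<n. \<Sum>i<n. (if Q k i \<noteq> 0 then (y k)^2 else 0)) \<le> (\<Sum>k<n. real K * (y k)^2)"
      by (intro sum_mono) auto
    thus ?thesis unfolding Y_def by (simp add: sum_distrib_left)
  qed
  finally have "(\<Sum>j<n. (z j)^2) \<le> real K * Y / 2 + real K * Y / 2" by simp
  with Y2 have "Y^2 \<le> real K * Y" by (simp add: mult.commute)
  hence "Y \<le> real K" using Y0
    by (cases "Y = 0") (auto simp: power2_eq_square)
  thus ?thesis unfolding Y_def y_def .
qed

definition dmat :: "nat \<Rightarrow> (nat \<Rightarrow> real) \<Rightarrow> real mat" where
  "dmat n f = mat n n (\<lambda>(i,j). if i = j then f i else 0)"

lemma dmat_carrier[simp]: "dmat n f \<in> carrier_mat n n" unfolding dmat_def by simp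
lemma dmat_dims[simp]: "dim_row (dmat n f) = n" "dim_col (dmat n f) = n" unfolding dmat_def by simp_all
lemma dmat_index[simp]: "i < n \<Longrightarrow> j < n \<Longrightarrow> dmat n f $$ (i,j) = (if i = j then f i else 0)"
  unfolding dmat_def by simp

lemma dmat_mult_carrier[simp]: "A \<in> carrier_mat n m \<Longrightarrow> dmat n f * A \<in> carrier_mat n m"
  by (rule mult_carrier_mat[OF dmat_carrier])
lemma mult_dmat_carrier[simp]: "A \<in> carrier_mat m n \<Longrightarrow> A * dmat n f \<in> carrier_mat m n"
  by (rule mult_carrier_mat[OF _ dmat_carrier])

lemma dmat_left: assumes A: "A \<in> carrier_mat n m" and i: "i < n" and j: "j < m"
  shows "(dmat n f * A)$$(i,j) = f i * A$$(i,j)"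
proof -
  have "(dmat n f * A)$$(i,j) = (\<Sum>k\<in>{0..<n}. dmat n f $$ (i,k) * A$$(k,j))"
    using A i j by (simp add: scalar_prod_def)
  also have "\<dots> = (\<Sum>k\<in>{0..<n}. (if i = k then f i * A$$(i,j) else 0))"
    using i by (intro sum.cong refl) auto
  also have "\<dots> = f i * A$$(i,j)" using i by simp
  finally show ?thesis .
qed

lemma dmat_right: assumes A: "A \<in> carrier_mat m n" and i: "i < m" and j: "j < n"
  shows "(A * dmat n f)$$(i,j) = A$$(i,j) * f j"
proof -
  have "(A * dmat n f)$$(i,j) = (\<Sum>k\<in>{0..<n}. A$$(i,k) * dmat n f $$ (k,j))"
    using A i j by (simp add: scalar_prod_def)
  also have "\<dots> = (\<Sum>k\<in>{0..<n}. (if k = j then A$$(i,j) * f j else 0))"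
    using j by (intro sum.cong refl) auto
  also have "\<dots> = A$$(i,j) * f j" using j by simp
  finally show ?thesis .
qed

lemma dmat_mult: "dmat n f * dmat n g = dmat n (\<lambda>i. f i * g i)"
proof (rule eq_matI)
  fix i j assume i: "i < dim_row (dmat n (\<lambda>i. f i * g i))" and j: "j < dim_col (dmat n (\<lambda>i. f i * g i))"
  then show "(dmat n f * dmat n g) $$ (i,j) = dmat n (\<lambda>i. f i * g i) $$ (i,j)"
    using dmat_left[OF dmat_carrier, of i n j f g] by simp
qed simp_all

lemma dmat_one: "(\<And>i. i < n \<Longrightarrow> f i = 1) \<Longrightarrow> dmat n f = 1\<^sub>m n"
  by (rule eq_matI) simp_all

lemma inverts_dims: assumes A: "A \<in> carrier_mat n n" and h: "inverts_mat A B" "inverts_mat B A"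
  shows "B \<in> carrier_mat n n"
proof -
  have AB: "A * B = 1\<^sub>m n" and BA: "B * A = 1\<^sub>m (dim_row B)" using h A unfolding inverts_mat_def by auto
  have "dim_col B = n" using arg_cong[OF AB, of dim_col] by simp
  moreover have "dim_row B = n" using arg_cong[OF BA, of dim_col] A by simp
  ultimately show ?thesis by auto
qed

lemma mat_inv_eq: assumes A: "A \<in> carrier_mat n n" and B: "B \<in> carrier_mat n n" and AB: "A * B = 1\<^sub>m n"
  shows "mat_inv A = B"
proof -
  have BA: "B * A = 1\<^sub>m n" by (rule mat_mult_left_right_inverse[OF A B AB])
  have ex: "inverts_mat A B \<and> inverts_mat B A" using A B AB BA unfolding inverts_mat_def by auto
  define B' where "B' = mat_inv A"
  have h: "inverts_mat A B' \<and> inverts_mat B' A" unfolding B'_def mat_inv_def by (rule someI, rule ex)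
  have B': "B' \<in> carrier_mat n n" using inverts_dims[OF A] h by auto
  have B'A: "B' * A = 1\<^sub>m n" using h B' unfolding inverts_mat_def by auto
  have "B' = B' * (A * B)" using B' AB by simp
  also have "\<dots> = (B' * A) * B" using A B B' by (simp add: assoc_mult_mat[of _ n n _ n _ n])
  also have "\<dots> = B" using B'A B by simp
  finally show ?thesis unfolding B'_def .
qed

lemma mat_inv_props: assumes A: "A \<in> carrier_mat n n" and inv: "invertible_mat A"
  shows "mat_inv A \<in> carrier_mat n n" "A * mat_inv A = 1\<^sub>m n" "mat_inv A * A = 1\<^sub>m n"
proof -
  obtain B where h: "inverts_mat A B" "inverts_mat B A" using inv unfolding invertible_mat_def by auto
  have B: "B \<in> carrier_mat n n" by (rule inverts_dims[OF A h])
  have AB: "A * B = 1\<^sub>m n" using h A unfolding inverts_mat_def by auto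
  have e: "mat_inv A = B" by (rule mat_inv_eq[OF A B AB])
  show "mat_inv A \<in> carrier_mat n n" "A * mat_inv A = 1\<^sub>m n" "mat_inv A * A = 1\<^sub>m n"
    unfolding e using B AB mat_mult_left_right_inverse[OF A B AB] by auto
qed

lemma row_nonzero: fixes A :: "real mat" assumes A: "A \<in> carrier_mat n n" and B: "B \<in> carrier_mat n n"
  and AB: "A * B = 1\<^sub>m n" and i: "i < n"
  shows "\<exists>k<n. A$$(i,k) \<noteq> 0"
proof (rule ccontr)
  assume "\<not> ?thesis"
  hence z: "\<And>k. k < n \<Longrightarrow> A$$(i,k) = 0" by auto
  have "(A * B)$$(i,i) = (\<Sum>k\<in>{0..<n}. A$$(i,k) * B$$(k,i))" using A B i by (simp add: scalar_prod_def)
  also have "\<dots> = 0" using z by simp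
  finally show False using AB i by simp
qed

lemma ATA_entry: assumes A: "A \<in> carrier_mat n n" and i: "i < n" and j: "j < n"
  shows "(transpose_mat A * A)$$(i,j) = (\<Sum>k<n. A$$(k,i) * A$$(k,j))"
  using A i j by (simp add: scalar_prod_def atLeast0LessThan)

lemma schatten4_nonneg: assumes A: "A \<in> carrier_mat n n" shows "schatten4 A \<ge> 0"
  unfolding schatten4_formula[OF A] by (simp add: sum_nonneg)

lemma S4mono:
  assumes X: "X \<in> carrier_mat n n" and e: "\<And>i. i < n \<Longrightarrow> \<bar>e i\<bar> \<le> m" and m: "m \<ge> 0"
  shows "schatten4 (X * dmat n e) \<le> m * schatten4 X"
proof -
  let ?P = "transpose_mat X * X"
  have XE: "X * dmat n e \<in> carrier_mat n n" using X by simp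
  have ent: "(transpose_mat (X * dmat n e) * (X * dmat n e))$$(i,j) = e i * e j * ?P$$(i,j)"
    if i: "i < n" and j: "j < n" for i j
  proof -
    have "(transpose_mat (X * dmat n e) * (X * dmat n e))$$(i,j) = (\<Sum>k<n. (X * dmat n e)$$(k,i) * (X * dmat n e)$$(k,j))"
      by (rule ATA_entry[OF XE i j])
    also have "\<dots> = (\<Sum>k<n. e i * e j * (X$$(k,i) * X$$(k,j)))"
      using i j by (intro sum.cong refl) (simp add: dmat_right[OF X])
    also have "\<dots> = e i * e j * ?P$$(i,j)" using ATA_entry[OF X i j] by (simp add: sum_distrib_left)
    finally show ?thesis .
  qed
  have "(\<Sum>i<n. \<Sum>j<n. ((transpose_mat (X * dmat n e) * (X * dmat n e))$$(i,j))^2)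
        \<le> (\<Sum>i<n. \<Sum>j<n. m^4 * (?P$$(i,j))^2)"
  proof (intro sum_mono)
    fix i j assume i: "i \<in> {..<n}" and j: "j \<in> {..<n}"
    have ei: "(e i)^2 \<le> m^2"
    proof -
      have "\<bar>e i\<bar>^2 \<le> m^2" by (rule power_mono) (use e[of i] i in auto)
      thus ?thesis by simp
    qed
    have ej: "(e j)^2 \<le> m^2"
    proof -
      have "\<bar>e j\<bar>^2 \<le> m^2" by (rule power_mono) (use e[of j] j in auto)
      thus ?thesis by simp
    qed
    have "(e i)^2 * (e j)^2 \<le> m^2 * m^2" by (rule mult_mono[OF ei ej]) auto
    hence "(e i)^2 * (e j)^2 * (?P$$(i,j))^2 \<le> m^2 * m^2 * (?P$$(i,j))^2"
      by (rule mult_right_mono) simp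
    thus "((transpose_mat (X * dmat n e) * (X * dmat n e))$$(i,j))^2 \<le> m^4 * (?P$$(i,j))^2"
    proof -
      have "((transpose_mat (X * dmat n e) * (X * dmat n e))$$(i,j))^2 = (e i)^2 * (e j)^2 * (?P$$(i,j))^2"
        by (subst ent) (use i j in \<open>auto simp: power_mult_distrib\<close>)
      also have "\<dots> \<le> m^2 * m^2 * (?P$$(i,j))^2" by fact
      also have "\<dots> = m^4 * (?P$$(i,j))^2" by (simp add: power4_eq_xxxx power2_eq_square)
      finally show ?thesis .
    qed
  qed
  also have "\<dots> = m^4 * (\<Sum>i<n. \<Sum>j<n. (?P$$(i,j))^2)" by (simp add: sum_distrib_left)
  finally have le: "(\<Sum>i<n. \<Sum>j<n. ((transpose_mat (X * dmat n e) * (X * dmat n e))$$(i,j))^2)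
     \<le> m^4 * (\<Sum>i<n. \<Sum>j<n. (?P$$(i,j))^2)" .
  have "schatten4 (X * dmat n e) \<le> root 4 (m^4 * (\<Sum>i<n. \<Sum>j<n. (?P$$(i,j))^2))"
    unfolding schatten4_formula[OF XE] using le by (subst real_root_le_iff) auto
  also have "\<dots> = root 4 (m^4) * schatten4 X" unfolding schatten4_formula[OF X] by (simp add: real_root_mult)
  also have "root 4 (m^4) = m" using m by (simp add: real_root_power_cancel)
  finally show ?thesis .
qed

theorem proposition2:
  fixes L Dopt :: "real mat" and N K :: nat
  assumes "L \<in> carrier_mat N N" and "invertible_mat L"
    and "Dopt \<in> carrier_mat N N" and "diagonal_mat Dopt" and "invertible_mat Dopt"
    and "\<forall>G \<in> carrier_mat N N. diagonal_mat G \<and> invertible_mat G \<longrightarrow>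
           kappa (mat_inv Dopt * L) \<le> kappa (mat_inv G * L)"
  shows "kappa (mat_inv (jacobi_diag L) * L) \<le> sqrt (real N) * kappa (mat_inv Dopt * L)
     \<and> ((\<forall>i<N. card {j. j < N \<and> (L * transpose_mat L) $$ (i,j) \<noteq> 0} \<le> K) \<longrightarrow>
        kappa (mat_inv (jacobi_diag L) * L) \<le> sqrt (real K) * kappa (mat_inv Dopt * L))"
proof -
  have L: "L \<in> carrier_mat N N" by fact
  have G: "Dopt \<in> carrier_mat N N" by fact
  define Li where "Li = mat_inv L"
  have Li: "Li \<in> carrier_mat N N" "L * Li = 1\<^sub>m N" "Li * L = 1\<^sub>m N"
    using mat_inv_props[OF assms(1,2)] unfolding Li_def by auto
  define Gi where "Gi = mat_inv Dopt"
  have Gi: "Gi \<in> carrier_mat N N" "Dopt * Gi = 1\<^sub>m N"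
    using mat_inv_props[OF assms(3,5)] unfolding Gi_def by auto
  define C where "C = L * transpose_mat L"
  have Cij: "C$$(i,j) = (\<Sum>k<N. L$$(i,k) * L$$(j,k))" if "i < N" "j < N" for i j
    unfolding C_def using L that by (simp add: scalar_prod_def atLeast0LessThan)
  have Cpos: "C$$(i,i) > 0" if i: "i < N" for i
  proof -
    obtain k where k: "k < N" "L$$(i,k) \<noteq> 0" using row_nonzero[OF L Li(1) Li(2) i] by blast
    have "0 < (L$$(i,k))^2" using k by simp
    also have "\<dots> \<le> (\<Sum>k<N. (L$$(i,k))^2)" using k by (intro member_le_sum) auto
    also have "\<dots> = C$$(i,i)" using Cij[OF i i] by (simp add: power2_eq_square)
    finally show ?thesis .
  qed
  define d where "d i = sqrt (C$$(i,i))" for i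
  have dpos: "d i > 0" if "i < N" for i using Cpos[OF that] unfolding d_def by simp
  have dsq: "(d i)^2 = C$$(i,i)" if "i < N" for i using Cpos[OF that] unfolding d_def by simp
  have Lrow: "(\<Sum>j<N. (L$$(i,j))^2) = (d i)^2" if i: "i < N" for i
    using dsq[OF i] Cij[OF i i] by (simp add: power2_eq_square)
  have JD: "jacobi_diag L = dmat N d"
    unfolding jacobi_diag_def Let_def C_def[symmetric] d_def using L
    by (intro eq_matI) auto
  define g where "g i = Dopt$$(i,i)" for i
  have GD: "Dopt = dmat N g"
    using assms(4) G unfolding g_def diagonal_mat_def by (intro eq_matI) auto
  have gnz: "g i \<noteq> 0" if i: "i < N" for i
  proof -
    obtain k where k: "k < N" "Dopt$$(i,k) \<noteq> 0" using row_nonzero[OF G Gi(1) Gi(2) i] by blast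
    thus ?thesis using i unfolding GD by (auto split: if_splits)
  qed
  have invd: "mat_inv (dmat N d) = dmat N (\<lambda>i. 1 / d i)"
    by (rule mat_inv_eq[OF dmat_carrier dmat_carrier]) (simp add: dmat_mult dmat_one dpos less_imp_neq[symmetric])
  have invg: "mat_inv (dmat N g) = dmat N (\<lambda>i. 1 / g i)"
    by (rule mat_inv_eq[OF dmat_carrier dmat_carrier]) (simp add: dmat_mult dmat_one gnz)
  define B1 where "B1 = dmat N (\<lambda>i. 1 / d i) * L"
  define B2 where "B2 = dmat N (\<lambda>i. 1 / g i) * L"
  have B1: "B1 \<in> carrier_mat N N" unfolding B1_def using L by simp
  have B2: "B2 \<in> carrier_mat N N" unfolding B2_def using L by simp
  have iB: "mat_inv (dmat N (\<lambda>i. 1 / f i) * L) = Li * dmat N f" if f: "\<And>i. i < N \<Longrightarrow> f i \<noteq> 0" for f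
  proof (rule mat_inv_eq[of _ N])
    show "dmat N (\<lambda>i. 1 / f i) * L \<in> carrier_mat N N" using L by simp
    show "Li * dmat N f \<in> carrier_mat N N" using Li by simp
    have a1: "dmat N (\<lambda>i. 1 / f i) * L * (Li * dmat N f) = dmat N (\<lambda>i. 1 / f i) * (L * (Li * dmat N f))"
      by (rule assoc_mult_mat[OF dmat_carrier L mult_dmat_carrier[OF Li(1)]])
    have a2: "L * (Li * dmat N f) = (L * Li) * dmat N f"
      by (rule assoc_mult_mat[symmetric, OF L Li(1) dmat_carrier])
    have "dmat N (\<lambda>i. 1 / f i) * L * (Li * dmat N f) = dmat N (\<lambda>i. 1 / f i) * dmat N f"
      unfolding a1 a2 Li(2) by simp
    also have "\<dots> = 1\<^sub>m N" by (simp add: dmat_mult dmat_one f)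
    finally show "dmat N (\<lambda>i. 1 / f i) * L * (Li * dmat N f) = 1\<^sub>m N" .
  qed
  have K1: "kappa (mat_inv (jacobi_diag L) * L) = spec_norm B1 * schatten4 (Li * dmat N d)"
    unfolding kappa_def JD invd B1_def[symmetric] using iB[of d] dpos unfolding B1_def
    by (metis less_imp_neq)
  have K2: "kappa (mat_inv Dopt * L) = spec_norm B2 * schatten4 (Li * dmat N g)"
    unfolding kappa_def GD invg B2_def[symmetric] using iB[of g] gnz unfolding B2_def by metis
  have Ldg: "Li * dmat N d = (Li * dmat N g) * dmat N (\<lambda>i. d i / g i)"
  proof -
    have "dmat N d = dmat N (\<lambda>i. g i * (d i / g i))"
      by (rule eq_matI) (auto simp: gnz)
    also have "\<dots> = dmat N g * dmat N (\<lambda>i. d i / g i)" by (rule dmat_mult[symmetric])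
    finally have e: "dmat N d = dmat N g * dmat N (\<lambda>i. d i / g i)" .
    show ?thesis unfolding e by (rule assoc_mult_mat[symmetric, OF Li(1) dmat_carrier dmat_carrier])
  qed
  have B1ij: "B1$$(i,j) = L$$(i,j) / d i" if "i < N" "j < N" for i j
    unfolding B1_def using dmat_left[OF L that, of "\<lambda>i. 1 / d i"] by simp
  have B2ij: "B2$$(i,j) = L$$(i,j) / g i" if "i < N" "j < N" for i j
    unfolding B2_def using dmat_left[OF L that, of "\<lambda>i. 1 / g i"] by simp
  define m where "m = spec_norm B2"
  have m0: "m \<ge> 0" unfolding m_def by (rule spec_norm_nonneg[OF B2])
  have rowB2: "\<bar>d i / g i\<bar> \<le> m" if i: "i < N" for i
  proof -
    have "(\<Sum>j<N. (B2$$(i,j))^2) = (\<Sum>j<N. (L$$(i,j))^2) / (g i)^2"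
      using i by (simp add: B2ij sum_divide_distrib power_divide)
    also have "(\<Sum>j<N. (L$$(i,j))^2) = (d i)^2" using dsq[OF i] Cij[OF i i] by (simp add: power2_eq_square)
    finally have "sqrt (\<Sum>j<N. (B2$$(i,j))^2) = \<bar>d i / g i\<bar>"
      by (simp add: power_divide[symmetric])
    with spec_norm_row[OF B2 i] show ?thesis unfolding m_def by simp
  qed
  have S: "schatten4 (Li * dmat N d) \<le> m * schatten4 (Li * dmat N g)"
    unfolding Ldg by (rule S4mono[OF _ rowB2 m0]) (use Li in auto)
  have S1: "schatten4 (Li * dmat N d) \<ge> 0" by (rule schatten4_nonneg[of _ N]) (use Li in auto)
  have core: "kappa (mat_inv (jacobi_diag L) * L) \<le> c * kappa (mat_inv Dopt * L)"
    if c: "c \<ge> 0" "spec_norm B1 \<le> c" for c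
  proof -
    have "kappa (mat_inv (jacobi_diag L) * L) \<le> c * schatten4 (Li * dmat N d)"
      unfolding K1 by (rule mult_right_mono[OF c(2) S1])
    also have "\<dots> \<le> c * (m * schatten4 (Li * dmat N g))" by (rule mult_left_mono[OF S c(1)])
    finally show ?thesis unfolding K2 m_def by simp
  qed
  have N1: "spec_norm B1 \<le> sqrt (real N)"
  proof (rule spec_norm_le[OF B1])
    fix x assume x: "x \<in> carrier_vec N" "vnorm2 x = 1"
    have "(vnorm2 (B1 *\<^sub>v x))^2 \<le> (\<Sum>i<N. \<Sum>j<N. (B1$$(i,j))^2)" by (rule frob_bound[OF B1 x])
    also have "\<dots> = (\<Sum>i<N. (1::real))"
    proof (intro sum.cong refl)
      fix i assume i: "i \<in> {..<N}"
      have "(\<Sum>j<N. (B1$$(i,j))^2) = (\<Sum>j<N. (L$$(i,j))^2) / (d i)^2"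
        using i by (simp add: B1ij sum_divide_distrib power_divide)
      also have "(\<Sum>j<N. (L$$(i,j))^2) = (d i)^2" using i dsq Cij by (simp add: power2_eq_square)
      finally show "(\<Sum>j<N. (B1$$(i,j))^2) = 1" using dpos[of i] i by (simp add: less_imp_neq[symmetric])
    qed
    also have "\<dots> = (sqrt (real N))^2" by simp
    finally show "(vnorm2 (B1 *\<^sub>v x))^2 \<le> (sqrt (real N))^2" .
  qed simp
  have N2: "spec_norm B1 \<le> sqrt (real K)"
    if sp: "\<forall>i<N. card {j. j < N \<and> (L * transpose_mat L) $$ (i,j) \<noteq> 0} \<le> K"
  proof (rule spec_norm_le[OF B1])
    fix x assume x: "x \<in> carrier_vec N" "vnorm2 x = 1"
    have Qeq: "(\<Sum>j<N. B1$$(i,j) * B1$$(k,j)) = C$$(i,k) / (d i * d k)" if "i < N" "k < N" for i k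
      using that by (simp add: B1ij Cij sum_divide_distrib)
    have "(vnorm2 (B1 *\<^sub>v x))^2 = (\<Sum>i<N. (\<Sum>j<N. B1$$(i,j) * x$j)^2)" by (rule vnorm2_mv_sq[OF B1 x(1)])
    also have "\<dots> \<le> real K"
    proof (rule sparse_bound)
      fix i k assume i: "i < N" and k: "k < N"
      have "(C$$(i,k))^2 \<le> (\<Sum>j<N. (L$$(i,j))^2) * (\<Sum>j<N. (L$$(k,j))^2)"
        unfolding Cij[OF i k] by (rule CS_real) simp
      also have "\<dots> = (d i * d k)^2" by (simp only: Lrow[OF i] Lrow[OF k] power_mult_distrib)
      finally have "\<bar>C$$(i,k)\<bar> \<le> \<bar>d i * d k\<bar>" by (simp add: abs_le_square_iff)
      hence "\<bar>C$$(i,k)\<bar> \<le> d i * d k" using dpos[OF i] dpos[OF k] by simp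
      moreover have "d i * d k > 0" using dpos[OF i] dpos[OF k] by simp
      ultimately have "\<bar>C$$(i,k)\<bar> / (d i * d k) \<le> 1" by simp
      moreover have "\<bar>\<Sum>j<N. B1$$(i,j) * B1$$(k,j)\<bar> = \<bar>C$$(i,k)\<bar> / (d i * d k)"
        unfolding Qeq[OF i k] using dpos[OF i] dpos[OF k] by (simp add: abs_divide abs_mult)
      ultimately show "\<bar>\<Sum>j<N. B1$$(i,j) * B1$$(k,j)\<bar> \<le> 1" by simp
    next
      fix i assume i: "i < N"
      have "{k. k < N \<and> (\<Sum>j<N. B1$$(i,j) * B1$$(k,j)) \<noteq> 0} = {k. k < N \<and> (L * transpose_mat L) $$ (i,k) \<noteq> 0}"
        using i dpos by (auto simp: Qeq C_def[symmetric] less_imp_neq[symmetric])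
      thus "card {k. k < N \<and> (\<Sum>j<N. B1$$(i,j) * B1$$(k,j)) \<noteq> 0} \<le> K" using sp i by simp
    next
      show "(\<Sum>j<N. (x$j)^2) = 1" using vnorm2_one[OF x(2)] x(1) by simp
    qed
    also have "\<dots> = (sqrt (real K))^2" by simp
    finally show "(vnorm2 (B1 *\<^sub>v x))^2 \<le> (sqrt (real K))^2" .
  qed simp
  show ?thesis using core[OF _ N1] core[OF _ N2] by simp
qed

end
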